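(* Let $s\ge 1$ and let $p\in F_{2,2s}$ be a product of $2s$ real linear forms, with $p\ne\pm\ell^{2s}$ for every real linear form $\ell$. If $(a,b)\in\mathcal B(p)$, then $a\ge s$ and $b\ge s$.
   Context: $F_{2,2s}$ is the real vector space of real binary forms of degree $2s$ in $x,y$. A representation of $p\in F_{2,2s}$ is an expression $p=\sum_{j=1}^r\lambda_j(\alpha_jx+\beta_jy)^{2s}$ with $r\ge 0$ (the empty sum being $0$), $\alpha_j,\beta_j\in\mathbb R$ and $0\ne\lambda_j\in\mathbb R$; it is honest if the linear forms $\alpha_jx+\beta_jy$ are pairwise non-proportional. Its badge is $(a,b)$, where $a$ (resp. $b$) is the number of indices $j$ with $\lambda_j>0$ (resp. $\lambda_j<0$). $\mathcal B(p)$ denotes the set of badges of all honest representations of $p$. *)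

theory Defs
  imports Complex_Main
begin

text \<open>A real binary form in x, y is represented by its polynomial function
  real \<Rightarrow> real \<Rightarrow> real (over the infinite field of reals, equality of forms
  coincides with equality of the induced functions). A linear form
  alpha x + beta y is represented by its coefficient pair (alpha, beta).\<close>

definition proportional :: "real \<times> real \<Rightarrow> real \<times> real \<Rightarrow> bool" where
  "proportional l m \<longleftrightarrow>
     (\<exists>c. fst l = c * fst m \<and> snd l = c * snd m) \<or>
     (\<exists>c. fst m = c * fst l \<and> snd m = c * snd l)"

definition honest_rep ::
  "nat \<Rightarrow> (real \<Rightarrow> real \<Rightarrow> real) \<Rightarrow> nat \<Rightarrow> (nat \<Rightarrow> real) \<Rightarrow> (nat \<Rightarrow> real) \<Rightarrow> (nat \<Rightarrow> real) \<Rightarrow> bool"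
  where
  "honest_rep s p r lam al be \<longleftrightarrow>
     (\<forall>j<r. lam j \<noteq> 0) \<and>
     (\<forall>i<r. \<forall>j<r. i \<noteq> j \<longrightarrow> \<not> proportional (al i, be i) (al j, be j)) \<and>
     (\<forall>x y. p x y = (\<Sum>j<r. lam j * (al j * x + be j * y) ^ (2 * s)))"

definition badges :: "nat \<Rightarrow> (real \<Rightarrow> real \<Rightarrow> real) \<Rightarrow> (nat \<times> nat) set" where
  "badges s p = {(card {j. j < r \<and> lam j > 0}, card {j. j < r \<and> lam j < 0}) | r lam al be.
                   honest_rep s p r lam al be}"

end

theory Submission
  imports Defs "Jordan_Normal_Form.Char_Poly" "HOL-Computational_Algebra.Fundamental_Theorem_Algebra"
begin

interpretation of_real_poly_hom: map_poly_inj_idom_hom of_real ..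

lemma real_roots_split:
  fixes q :: "real poly"
  assumes "q \<noteq> 0" "\<forall>z. poly (map_poly of_real q) z = (0::complex) \<longrightarrow> Im z = 0"
  shows "\<exists>c \<rho>s. q = Polynomial.smult c (\<Prod>\<rho>\<leftarrow>\<rho>s. [:-\<rho>,1:]) \<and> length \<rho>s = degree q"
  using assms
proof (induction "degree q" arbitrary: q rule: less_induct)
  case less
  show ?case
  proof (cases "degree q = 0")
    case True
    then obtain c where "q = [:c:]" by (metis degree_eq_zeroE)
    then show ?thesis using True by (intro exI[of _ c] exI[of _ "[]"]) auto
  next
    case False
    have "\<not> constant (poly (map_poly of_real q :: complex poly))"
      using False by (simp add: constant_degree)
    then obtain z :: complex where z: "poly (map_poly of_real q) z = 0"
      using fundamental_theorem_of_algebra by blast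
    have "Im z = 0" using less.prems z by blast
    hence zr: "z = of_real (Re z)" by (simp add: complex_eq_iff)
    have "of_real (poly q (Re z)) = (0::complex)"
      using z zr by (metis of_real_hom.poly_map_poly)
    hence "poly q (Re z) = 0" by simp
    then obtain q' where q': "q = [:-Re z,1:] * q'"
      using poly_eq_0_iff_dvd by (metis dvdE)
    have q'0: "q' \<noteq> 0" using q' less.prems(1) by auto
    have "degree q = degree [:-Re z,1::real:] + degree q'"
      unfolding q' by (rule degree_mult_eq) (use q'0 in auto)
    hence dq: "degree q = Suc (degree q')" by simp
    have "\<forall>w. poly (map_poly of_real q') w = (0::complex) \<longrightarrow> Im w = 0"
    proof (intro allI impI)
      fix w :: complex assume "poly (map_poly of_real q') w = 0"
      hence "poly (map_poly of_real q) w = 0" unfolding q' of_real_poly_hom.hom_mult poly_mult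
        by simp
      thus "Im w = 0" using less.prems by blast
    qed
    then obtain c \<rho>s where IH: "q' = Polynomial.smult c (\<Prod>\<rho>\<leftarrow>\<rho>s. [:-\<rho>,1:])" "length \<rho>s = degree q'"
      using less.hyps[of q'] dq q'0 by auto
    have "q = Polynomial.smult c (\<Prod>\<rho>\<leftarrow>(Re z # \<rho>s). [:-\<rho>,1:])"
      by (simp only: q' IH(1) prod_list.Cons list.map mult_smult_right)
    moreover have "length (Re z # \<rho>s) = degree q" using IH(2) dq by simp
    ultimately show ?thesis by blast
  qed
qed

lemma gauss_lucas_aux:
  fixes \<rho>s :: "real list" and z :: complex
  assumes "Im z \<noteq> 0"
  defines "q \<equiv> ((\<Prod>\<rho>\<leftarrow>\<rho>s. [:- of_real \<rho>, 1:]) :: complex poly)"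
  shows "poly q z \<noteq> 0 \<and> (\<rho>s \<noteq> [] \<longrightarrow> Im (poly (pderiv q) z / poly q z) * Im z < 0)
     \<and> (\<rho>s = [] \<longrightarrow> pderiv q = 0)"
  unfolding q_def
proof (induction \<rho>s)
  case Nil
  then show ?case by simp
next
  case (Cons \<rho> \<rho>s)
  define Q where "Q = ((\<Prod>\<rho>\<leftarrow>\<rho>s. [:- of_real \<rho>, 1:]) :: complex poly)"
  have Q0: "poly Q z \<noteq> 0" using Cons unfolding Q_def by blast
  have zr: "z - of_real \<rho> \<noteq> 0" using assms by (auto simp: complex_eq_iff)
  have P0: "poly ([:- of_real \<rho>, 1:] * Q) z \<noteq> 0" using Q0 zr by simp
  have ratio: "poly (pderiv ([:- of_real \<rho>, 1:] * Q)) z / poly ([:- of_real \<rho>, 1:] * Q) z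
      = 1 / (z - of_real \<rho>) + poly (pderiv Q) z / poly Q z"
  proof -
    have e: "pderiv ([:- of_real \<rho>, 1:] * Q) = [:- of_real \<rho>, 1:] * pderiv Q + Q * pderiv [:- of_real \<rho>, 1:]"
      by (rule pderiv_mult)
    have "poly (pderiv ([:- of_real \<rho>, 1:] * Q)) z = poly ([:- of_real \<rho>, 1:] * pderiv Q + Q * pderiv [:- of_real \<rho>, 1:]) z"
      by (simp only: e)
    also have "\<dots> = (z - of_real \<rho>) * poly (pderiv Q) z + poly Q z"
      by (simp add: pderiv_pCons algebra_simps)
    finally have "poly (pderiv ([:- of_real \<rho>, 1:] * Q)) z = (z - of_real \<rho>) * poly (pderiv Q) z + poly Q z" .
    moreover have "poly ([:- of_real \<rho>, 1:] * Q) z = (z - of_real \<rho>) * poly Q z" by (simp add: algebra_simps)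
    ultimately show ?thesis using Q0 zr by (simp add: field_simps)
  qed
  have im1: "Im (1 / (z - of_real \<rho>)) * Im z < 0"
  proof -
    define D where "D = (Re z - \<rho>)\<^sup>2 + (Im z)\<^sup>2"
    have D: "D > 0" using assms unfolding D_def by (simp add: add_nonneg_pos)
    have "Im (1 / (z - of_real \<rho>)) = - Im z / D"
      unfolding D_def by (simp add: Im_divide)
    hence "Im (1 / (z - of_real \<rho>)) * Im z = - ((Im z)\<^sup>2 / D)"
      by (simp add: power2_eq_square)
    moreover have "(Im z)\<^sup>2 / D > 0" using D assms by simp
    ultimately show ?thesis by linarith
  qed
  have "Im (poly (pderiv Q) z / poly Q z) * Im z \<le> 0"
  proof (cases "\<rho>s = []")
    case True
    then have "pderiv Q = 0" using Cons unfolding Q_def by blast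
    then show ?thesis by simp
  next
    case False
    then show ?thesis using Cons unfolding Q_def by (meson less_imp_le)
  qed
  then have "Im (poly (pderiv ([:- of_real \<rho>, 1:] * Q)) z / poly ([:- of_real \<rho>, 1:] * Q) z) * Im z < 0"
    using im1 unfolding ratio by (simp add: distrib_right)
  then show ?case using P0 unfolding Q_def by simp
qed

lemma pderiv_split:
  fixes c :: real and \<rho>s :: "real list"
  defines "g \<equiv> Polynomial.smult c (\<Prod>\<rho>\<leftarrow>\<rho>s. [:-\<rho>,1:])"
  shows "\<exists>c' \<rho>s'. pderiv g = Polynomial.smult c' (\<Prod>\<rho>\<leftarrow>\<rho>s'. [:-\<rho>,1:]) \<and> length \<rho>s' = degree (pderiv g)"
proof (cases "pderiv g = 0")
  case True thus ?thesis by (intro exI[of _ 0] exI[of _ "[]"]) simp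
next
  case False
  have ne: "\<rho>s \<noteq> []" using False g_def by auto
  show ?thesis
  proof (rule real_roots_split[OF False], intro allI impI)
    fix z :: complex assume z: "poly (map_poly of_real (pderiv g)) z = 0"
    show "Im z = 0"
    proof (rule ccontr)
      assume nz: "Im z \<noteq> 0"
      define q where "q = ((\<Prod>\<rho>\<leftarrow>\<rho>s. [:- of_real \<rho>, 1:]) :: complex poly)"
      have mg: "map_poly of_real g = Polynomial.smult (of_real c) q"
        unfolding g_def q_def
        by (simp add: of_real_hom.map_poly_hom_smult of_real_poly_hom.hom_prod_list o_def)
      have "map_poly of_real (pderiv g) = Polynomial.smult (of_real c) (pderiv q)"
        by (simp add: of_real_hom.map_poly_pderiv mg pderiv_smult)
      with z have z2: "of_real c * poly (pderiv q) z = 0" by simp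
      have c: "c \<noteq> 0" using False g_def by auto
      with z2 have "poly (pderiv q) z = 0" by simp
      moreover have "Im (poly (pderiv q) z / poly q z) * Im z < 0"
        using gauss_lucas_aux[OF nz, of \<rho>s] ne unfolding q_def by blast
      ultimately show False by simp
    qed
  qed
qed

lemma lin_prod_split:
  fixes n :: nat and a b :: "nat \<Rightarrow> real"
  shows
  "\<exists>c \<rho>s. (\<Prod>i<n. [:a i, b i:] :: real poly) = Polynomial.smult c (\<Prod>\<rho>\<leftarrow>\<rho>s. [:-\<rho>,1:])"
proof (induction n)
  case 0
  then show ?case by (intro exI[of _ 1] exI[of _ "[]"]) simp
next
  case (Suc n)
  then obtain c \<rho>s where IH: "(\<Prod>i<n. [:a i, b i:] :: real poly) = Polynomial.smult c (\<Prod>\<rho>\<leftarrow>\<rho>s. [:-\<rho>,1:])"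
    by blast
  show ?case
  proof (cases "b n = 0")
    case True
    have "(\<Prod>i<Suc n. [:a i, b i:] :: real poly) = Polynomial.smult (c * a n) (\<Prod>\<rho>\<leftarrow>\<rho>s. [:-\<rho>,1:])"
      by (simp add: IH True mult.commute)
    then show ?thesis by blast
  next
    case False
    have e: "[:a n, b n:] = Polynomial.smult (b n) [:- (- a n / b n), 1:]" using False by simp
    have "(\<Prod>i<Suc n. [:a i, b i:] :: real poly) = Polynomial.smult (c * b n) (\<Prod>\<rho>\<leftarrow>(- a n / b n) # \<rho>s. [:-\<rho>,1:])"
      by (simp only: prod.lessThan_Suc IH e prod_list.Cons list.map mult_smult_left mult_smult_right
          smult_smult) (simp add: mult.commute)
    then show ?thesis by blast
  qed
qed

definition Dop :: "real \<times> real \<Rightarrow> (real \<Rightarrow> real \<Rightarrow> real) \<Rightarrow> real \<Rightarrow> real \<Rightarrow> real" where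
  "Dop w F x y = (THE d. ((\<lambda>t. F (x + t * fst w) (y + t * snd w)) has_field_derivative d) (at 0))"

definition hyp :: "nat \<Rightarrow> (real \<Rightarrow> real \<Rightarrow> real) \<Rightarrow> bool" where
  "hyp n F \<longleftrightarrow> (\<exists>c u v. \<forall>x y. F x y = c * (\<Prod>i<n. u i * x + v i * y))"

lemma Dop_eq:
  assumes "((\<lambda>t. F (x + t * fst w) (y + t * snd w)) has_field_derivative d) (at 0)"
  shows "Dop w F x y = d"
  using assms unfolding Dop_def by (blast intro: the_equality DERIV_unique)

lemma Dop_prod:
  assumes "\<forall>x y. F x y = c * (\<Prod>i<n. u i * x + v i * y)"
  shows "Dop w F x y = c * (\<Sum>i<n. (u i * fst w + v i * snd w) * (\<Prod>k\<in>{..<n}-{i}. u k * x + v k * y))"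
proof -
  have eq: "(\<lambda>t. F (x + t * fst w) (y + t * snd w)) =
     (\<lambda>t. c * (\<Prod>i<n. u i * (x + t * fst w) + v i * (y + t * snd w)))"
    using assms by auto
  have pr: "((\<lambda>t. u i * (x + t * fst w) + v i * (y + t * snd w)) has_field_derivative (u i * fst w + v i * snd w)) (at 0)" for i
    by (auto intro!: derivative_eq_intros)
  have "((\<lambda>t. \<Prod>i<n. u i * (x + t * fst w) + v i * (y + t * snd w)) has_field_derivative
     (\<Sum>i<n. (u i * fst w + v i * snd w) * (\<Prod>k\<in>{..<n}-{i}. u k * x + v k * y))) (at 0)"
    using has_field_derivative_prod[of "{..<n}" "\<lambda>i t. u i * (x + t * fst w) + v i * (y + t * snd w)"
          "\<lambda>i. u i * fst w + v i * snd w" 0, OF pr] by simp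
  then have "((\<lambda>t. c * (\<Prod>i<n. u i * (x + t * fst w) + v i * (y + t * snd w))) has_field_derivative
     c * (\<Sum>i<n. (u i * fst w + v i * snd w) * (\<Prod>k\<in>{..<n}-{i}. u k * x + v k * y))) (at 0)"
    by (intro DERIV_cmult) simp
  then show ?thesis by (intro Dop_eq) (simp only: eq)
qed

lemma Dop_pow:
  assumes "\<forall>x y. F x y = (\<Sum>j<r. \<mu> j * (a j * x + b j * y) ^ M)"
  shows "Dop w F x y = (\<Sum>j<r. (\<mu> j * real M * (a j * fst w + b j * snd w)) * (a j * x + b j * y) ^ (M - 1))"
proof -
  have eq: "(\<lambda>t. F (x + t * fst w) (y + t * snd w)) =
     (\<lambda>t. \<Sum>j<r. \<mu> j * (a j * (x + t * fst w) + b j * (y + t * snd w)) ^ M)"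
    using assms by auto
  have "((\<lambda>t. \<Sum>j<r. \<mu> j * (a j * (x + t * fst w) + b j * (y + t * snd w)) ^ M) has_field_derivative
     (\<Sum>j<r. (\<mu> j * real M * (a j * fst w + b j * snd w)) * (a j * x + b j * y) ^ (M - 1))) (at 0)"
    by (auto intro!: derivative_eq_intros sum.cong)
  then show ?thesis by (intro Dop_eq) (simp only: eq)
qed

lemma cont_eq0:
  fixes f g :: "real \<Rightarrow> real"
  assumes "continuous_on UNIV f" "continuous_on UNIV g" "\<forall>e. e \<noteq> 0 \<longrightarrow> f e = g e"
  shows "f 0 = g 0"
proof -
  have f: "(f \<longlongrightarrow> f 0) (at 0)" using assms(1) by (simp add: continuous_on_def)
  have g: "(g \<longlongrightarrow> g 0) (at 0)" using assms(2) by (simp add: continuous_on_def)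
  have "eventually (\<lambda>e. g e = f e) (at 0)"
    using assms(3) by (simp add: eventually_at_filter)
  then have "(f \<longlongrightarrow> g 0) (at 0)" by (rule Lim_transform_eventually[OF g])
  then show ?thesis using f by (metis tendsto_unique at_neq_bot)
qed

lemma prod_list_nth_conv: "(\<Prod>\<rho>\<leftarrow>xs. f \<rho>) = (\<Prod>k<length xs. f (xs ! k))"
  by (simp add: prod.list_conv_set_nth atLeast0LessThan)

lemma hyp_Dop:
  assumes "hyp n F" "1 \<le> n"
  shows "hyp (n - 1) (Dop w F)"
proof -
  obtain c u v where F: "\<forall>x y. F x y = c * (\<Prod>i<n. u i * x + v i * y)"
    using assms unfolding hyp_def by blast
  define w1 where "w1 = fst w"
  define w2 where "w2 = snd w"
  define G where "G = (\<lambda>x y. c * (\<Sum>i<n. (u i * w1 + v i * w2) * (\<Prod>k\<in>{..<n}-{i}. u k * x + v k * y)))"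
  have DG: "Dop w F = G" using Dop_prod[OF F] by (auto simp: G_def w1_def w2_def fun_eq_iff)
  show ?thesis
  proof (cases "w1 = 0 \<and> w2 = 0")
    case True
    then have "\<forall>x y. Dop w F x y = 0" by (simp add: DG G_def)
    then show ?thesis unfolding hyp_def
      by (intro exI[of _ 0] exI[of _ "\<lambda>_. 0"]) simp
  next
    case False
    define N where "N = w1\<^sup>2 + w2\<^sup>2"
    have N: "N > 0" using False unfolding N_def by (simp add: sum_power2_gt_zero_iff)
    define a where "a i = u i * (- w2) + v i * w1" for i
    define b where "b i = u i * w1 + v i * w2" for i
    define g where "g = (\<Prod>i<n. [:a i, b i:] :: real poly)"
    obtain c0 \<rho>s0 where g_eq: "g = Polynomial.smult c0 (\<Prod>\<rho>\<leftarrow>\<rho>s0. [:-\<rho>,1:])"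
      using lin_prod_split unfolding g_def by blast
    obtain c' \<rho>s where gd: "pderiv g = Polynomial.smult c' (\<Prod>\<rho>\<leftarrow>\<rho>s. [:-\<rho>,1:])"
      "length \<rho>s = degree (pderiv g)"
      using pderiv_split[of c0 \<rho>s0] unfolding g_eq[symmetric] by blast
    define d where "d = length \<rho>s"
    have "degree g \<le> (\<Sum>i<n. (degree \<circ> (\<lambda>i. [:a i, b i:])) i)" unfolding g_def
      by (rule degree_prod_sum_le) simp
    also have "\<dots> \<le> (\<Sum>i<n. 1)" by (rule sum_mono) auto
    finally have "degree g \<le> (\<Sum>i<n. 1)" .
    then have dle: "d \<le> n - 1" using gd(2) unfolding d_def by (simp add: degree_pderiv)
    define al where "al x y = (- x * w2 + y * w1) / N" for x y
    define be where "be x y = (x * w1 + y * w2) / N" for x y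
    define U where "U k = (if k < d then (w1 + \<rho>s!k * w2)/N else - w2 / N)" for k
    define V where "V k = (if k < d then (w2 - \<rho>s!k * w1)/N else w1 / N)" for k
    define R where "R x y = c * c' * (\<Prod>k<n-1. U k * x + V k * y)" for x y
    have lin: "u i * x + v i * y = al x y * a i + be x y * b i" for i x y
    proof -
      have e: "(- x * w2 + y * w1) * a i + (x * w1 + y * w2) * b i = N * (u i * x + v i * y)"
        unfolding a_def b_def N_def by (simp add: algebra_simps power2_eq_square)
      have "al x y * a i + be x y * b i = ((- x * w2 + y * w1) * a i + (x * w1 + y * w2) * b i) / N"
        using N unfolding al_def be_def by (simp add: field_simps)
      then show ?thesis using e N by simp
    qed
    have fac: "U k * x + V k * y = (if k < d then be x y - \<rho>s!k * al x y else al x y)" for k x y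
      using N unfolding U_def V_def al_def be_def by (simp add: field_simps)
    have Rform: "R x y = c * c' * ((\<Prod>k<d. be x y - \<rho>s!k * al x y) * al x y ^ (n - 1 - d))" for x y
    proof -
      have split: "{..<n-1} = {..<d} \<union> {d..<n-1}" using dle by auto
      have "(\<Prod>k<n-1. U k * x + V k * y) = (\<Prod>k\<in>{..<d} \<union> {d..<n-1}. U k * x + V k * y)"
        by (simp only: split)
      also have "\<dots> = (\<Prod>k<d. U k * x + V k * y) * (\<Prod>k\<in>{d..<n-1}. U k * x + V k * y)"
        by (rule prod.union_disjoint) auto
      also have "\<dots> = (\<Prod>k<d. be x y - \<rho>s!k * al x y) * al x y ^ (n - 1 - d)"
        by (simp add: fac)
      finally show ?thesis unfolding R_def by simp
    qed
    have main_ne: "G x y = R x y" if ne: "al x y \<noteq> 0" for x y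
    proof -
      define A where "A = al x y"
      define B where "B = be x y"
      have shift: "u i * (x + t * fst w) + v i * (y + t * snd w) = A * (a i + ((B + t) / A) * b i)" for i t
      proof -
        have "al (x + t * w1) (y + t * w2) = A" unfolding al_def A_def by (simp add: field_simps)
        moreover have "be (x + t * w1) (y + t * w2) = B + t"
        proof -
          have "(x + t * w1) * w1 + (y + t * w2) * w2 = (x * w1 + y * w2) + t * N"
            unfolding N_def by (simp add: algebra_simps power2_eq_square)
          then show ?thesis using N unfolding be_def B_def by (simp add: add_divide_distrib)
        qed
        ultimately show ?thesis using lin[of i "x + t * w1" "y + t * w2"] ne
          unfolding w1_def w2_def A_def by (simp add: field_simps)
      qed
      have Fe: "(\<lambda>t. F (x + t * fst w) (y + t * snd w)) = (\<lambda>t. c * A ^ n * poly g ((B + t) / A))"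
      proof
        fix t
        have "F (x + t * fst w) (y + t * snd w) = c * (\<Prod>i<n. A * (a i + ((B + t) / A) * b i))"
          using F shift by simp
        also have "\<dots> = c * A ^ n * poly g ((B + t) / A)"
          unfolding g_def poly_prod by (simp add: prod.distrib mult.commute)
        finally show "F (x + t * fst w) (y + t * snd w) = c * A ^ n * poly g ((B + t) / A)" .
      qed
      have d1: "((\<lambda>t. (B + t) / A) has_field_derivative 1 / A) (at 0)"
        using ne unfolding A_def by (auto intro!: derivative_eq_intros)
      have d2: "((\<lambda>t. poly g ((B + t) / A)) has_field_derivative poly (pderiv g) ((B + 0) / A) * (1 / A)) (at 0)"
        by (rule DERIV_chain2[OF poly_DERIV d1])
      have "((\<lambda>t. c * A ^ n * poly g ((B + t) / A)) has_field_derivative c * A ^ n * (poly (pderiv g) ((B + 0) / A) * (1 / A))) (at 0)"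
        by (rule DERIV_cmult[OF d2])
      then have "Dop w F x y = c * A ^ n * (poly (pderiv g) (B / A) * (1 / A))"
        by (intro Dop_eq) (simp add: Fe)
      also have "poly (pderiv g) (B / A) = c' * (\<Prod>k<d. B / A - \<rho>s!k)"
        unfolding gd(1) d_def by (simp add: prod_list_nth_conv poly_prod)
      also have "A ^ n = A ^ (n - 1 - d) * A ^ d * A"
      proof -
        have nn: "n = Suc ((n - 1 - d) + d)" using dle assms(2) by arith
        show ?thesis by (subst nn) (simp only: power_Suc power_add mult_ac)
      qed
      finally have D1: "Dop w F x y = c * (A ^ (n - 1 - d) * A ^ d * A) * (c' * (\<Prod>k<d. B / A - \<rho>s!k) * (1 / A))" .
      have A1: "A * (1 / A) = 1" using ne unfolding A_def by simp
      have "c * (A ^ (n - 1 - d) * A ^ d * A) * (c' * (\<Prod>k<d. B / A - \<rho>s!k) * (1 / A))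
          = c * c' * ((A ^ d * (\<Prod>k<d. B / A - \<rho>s!k)) * A ^ (n - 1 - d)) * (A * (1 / A))"
        by (simp only: mult_ac)
      also have "A ^ d * (\<Prod>k<d. B / A - \<rho>s!k) = (\<Prod>k<d. A * (B / A - \<rho>s!k))"
        by (simp add: prod.distrib)
      finally have "Dop w F x y = c * c' * ((\<Prod>k<d. A * (B / A - \<rho>s!k)) * A ^ (n - 1 - d))"
        using D1 A1 by simp
      also have "(\<Prod>k<d. A * (B / A - \<rho>s!k)) = (\<Prod>k<d. B - \<rho>s!k * A)"
        using ne unfolding A_def by (intro prod.cong) (auto simp: field_simps)
      finally show ?thesis using Rform DG unfolding A_def B_def by simp
    qed
    have GR: "G x y = R x y" for x y
    proof (cases "al x y = 0")
      case False thus ?thesis by (rule main_ne)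
    next
      case True
      define f where "f e = G (x - e * w2) (y + e * w1)" for e
      define h where "h e = R (x - e * w2) (y + e * w1)" for e
      have num0: "- x * w2 + y * w1 = 0" using True N unfolding al_def by simp
      have "al (x - e * w2) (y + e * w1) = e" for e
      proof -
        have "- (x - e * w2) * w2 + (y + e * w1) * w1 = (- x * w2 + y * w1) + e * N"
          unfolding N_def by (simp add: algebra_simps power2_eq_square)
        then show ?thesis using N num0 unfolding al_def by simp
      qed
      then have "\<forall>e. e \<noteq> 0 \<longrightarrow> f e = h e" unfolding f_def h_def using main_ne by auto
      moreover have "continuous_on UNIV f" unfolding f_def G_def by (intro continuous_intros)
      moreover have "continuous_on UNIV h" unfolding h_def R_def by (intro continuous_intros)
      ultimately have "f 0 = h 0" by (intro cont_eq0) auto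
      then show ?thesis unfolding f_def h_def by simp
    qed
    have "\<forall>x y. Dop w F x y = (c * c') * (\<Prod>k<n-1. U k * x + V k * y)"
      using GR DG unfolding R_def by simp
    then show ?thesis unfolding hyp_def by blast
  qed
qed

definition Dlist :: "(real \<times> real) list \<Rightarrow> (real \<Rightarrow> real \<Rightarrow> real) \<Rightarrow> real \<Rightarrow> real \<Rightarrow> real" where
  "Dlist ws F = foldr Dop ws F"

lemma hyp_Dlist: "hyp n F \<Longrightarrow> length ws \<le> n \<Longrightarrow> hyp (n - length ws) (Dlist ws F)"
proof (induction ws)
  case Nil
  then show ?case by (simp add: Dlist_def)
next
  case (Cons w ws)
  then have "hyp (n - length ws) (Dlist ws F)" by simp
  moreover have "1 \<le> n - length ws" using Cons.prems by simp
  ultimately have "hyp (n - length ws - 1) (Dop w (Dlist ws F))" by (rule hyp_Dop)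
  then show ?case by (simp add: Dlist_def)
qed

definition pc :: "nat \<Rightarrow> nat \<Rightarrow> real" where "pc M k = (\<Prod>i<k. real (M - i))"

lemma pow_Dlist:
  assumes "\<forall>x y. F x y = (\<Sum>j<r. \<mu> j * (a j * x + b j * y) ^ M)"
  shows "\<forall>x y. Dlist ws F x y = (\<Sum>j<r. (\<mu> j * pc M (length ws) *
      prod_list (map (\<lambda>w. a j * fst w + b j * snd w) ws)) * (a j * x + b j * y) ^ (M - length ws))"
proof (induction ws)
  case Nil
  then show ?case using assms by (simp add: Dlist_def pc_def)
next
  case (Cons w ws)
  show ?case
  proof (intro allI)
    fix x y
    have "Dlist (w # ws) F x y = Dop w (Dlist ws F) x y" by (simp add: Dlist_def)
    also have "Dop w (Dlist ws F) x y = (\<Sum>j<r. ((\<mu> j * pc M (length ws) *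
        prod_list (map (\<lambda>w. a j * fst w + b j * snd w) ws)) * real (M - length ws) * (a j * fst w + b j * snd w))
        * (a j * x + b j * y) ^ (M - length ws - 1))"
      by (rule Dop_pow[OF Cons.IH])
    also have "\<dots> = (\<Sum>j<r. (\<mu> j * pc M (length (w # ws)) *
      prod_list (map (\<lambda>w. a j * fst w + b j * snd w) (w # ws))) * (a j * x + b j * y) ^ (M - length (w # ws)))"
    proof (rule sum.cong[OF refl])
      fix j
      have pcS: "pc M (length (w # ws)) = pc M (length ws) * real (M - length ws)"
        by (simp add: pc_def)
      have ex: "M - length ws - 1 = M - length (w # ws)" by simp
      show "((\<mu> j * pc M (length ws) *
        prod_list (map (\<lambda>w. a j * fst w + b j * snd w) ws)) * real (M - length ws) * (a j * fst w + b j * snd w))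
        * (a j * x + b j * y) ^ (M - length ws - 1) = (\<mu> j * pc M (length (w # ws)) *
      prod_list (map (\<lambda>w. a j * fst w + b j * snd w) (w # ws))) * (a j * x + b j * y) ^ (M - length (w # ws))"
        unfolding pcS ex list.map prod_list.Cons by (simp only: mult_ac)
    qed
    finally show "Dlist (w # ws) F x y = (\<Sum>j<r. (\<mu> j * pc M (length (w # ws)) *
      prod_list (map (\<lambda>w. a j * fst w + b j * snd w) (w # ws))) * (a j * x + b j * y) ^ (M - length (w # ws)))" .
  qed
qed

lemma pc_pos: "k \<le> M \<Longrightarrow> pc M k > 0"
  unfolding pc_def by (intro prod_pos) auto

lemma final_contra:
  fixes r j1 j2 :: nat
  assumes "hyp 2 Q" "\<forall>x y. Q x y = (\<Sum>j<r. \<kappa> j * (a j * x + b j * y) ^ 2)" "\<forall>j<r. \<kappa> j \<ge> 0"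
    "j1 < r" "j2 < r" "\<kappa> j1 > 0" "\<kappa> j2 > 0" "a j1 * b j2 - b j1 * a j2 \<noteq> 0"
  shows False
proof -
  obtain c u v where Q: "\<forall>x y. Q x y = c * (\<Prod>i<(2::nat). u i * x + v i * y)"
    using assms(1) unfolding hyp_def by blast
  obtain x y where xy: "x \<noteq> 0 \<or> y \<noteq> 0" "u 0 * x + v 0 * y = 0"
  proof (cases "u 0 = 0 \<and> v 0 = 0")
    case True then show ?thesis using that[of 1 0] by simp
  next
    case False then show ?thesis using that[of "v 0" "- u 0"] by (auto simp: algebra_simps)
  qed
  have "Q x y = 0" using Q xy(2) by (simp add: numeral_2_eq_2)
  then have "(\<Sum>j<r. \<kappa> j * (a j * x + b j * y) ^ 2) = 0" using assms(2) by simp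
  moreover have "\<forall>j\<in>{..<r}. \<kappa> j * (a j * x + b j * y) ^ 2 \<ge> 0" using assms(3) by simp
  ultimately have z: "\<forall>j\<in>{..<r}. \<kappa> j * (a j * x + b j * y) ^ 2 = 0"
    using sum_nonneg_eq_0_iff[where A="{..<r}" and f="\<lambda>j. \<kappa> j * (a j * x + b j * y) ^ 2"] by auto
  have "\<kappa> j1 * (a j1 * x + b j1 * y) ^ 2 = 0" using z assms(4) by simp
  then have l1: "a j1 * x + b j1 * y = 0" using assms(6) by simp
  have "\<kappa> j2 * (a j2 * x + b j2 * y) ^ 2 = 0" using z assms(5) by simp
  then have l2: "a j2 * x + b j2 * y = 0" using assms(7) by simp
  have "x * (a j1 * b j2 - b j1 * a j2) = b j2 * (a j1 * x + b j1 * y) - b j1 * (a j2 * x + b j2 * y)"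
    by (simp add: algebra_simps)
  then have "x = 0" using l1 l2 assms(8) by simp
  have "y * (a j1 * b j2 - b j1 * a j2) = a j1 * (a j2 * x + b j2 * y) - a j2 * (a j1 * x + b j1 * y)"
    by (simp add: algebra_simps)
  then have "y = 0" using l1 l2 assms(8) by simp
  show False using xy(1) \<open>x = 0\<close> \<open>y = 0\<close> by simp
qed

lemma contra_ws:
  fixes r j1 j2 :: nat
  assumes s1: "s \<ge> 1" and hp: "hyp (2*s) p"
    and pe: "\<forall>x y. p x y = (\<Sum>j<r. lam j * (al j * x + be j * y) ^ (2*s))"
    and len: "length ws = 2*s - 2"
    and nn: "\<forall>j<r. lam j * prod_list (map (\<lambda>w. al j * fst w + be j * snd w) ws) \<ge> 0"
    and j: "j1 < r" "j2 < r" "lam j1 * prod_list (map (\<lambda>w. al j1 * fst w + be j1 * snd w) ws) > 0"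
      "lam j2 * prod_list (map (\<lambda>w. al j2 * fst w + be j2 * snd w) ws) > 0"
      "al j1 * be j2 - be j1 * al j2 \<noteq> 0"
  shows False
proof -
  define K where "K j = lam j * pc (2*s) (length ws) * prod_list (map (\<lambda>w. al j * fst w + be j * snd w) ws)" for j
  have pcp: "pc (2*s) (length ws) > 0" using len by (intro pc_pos) simp
  have ex: "2 * s - length ws = 2" using len s1 by simp
  have "hyp (2*s - length ws) (Dlist ws p)" by (rule hyp_Dlist[OF hp]) (simp add: len)
  then have h2: "hyp 2 (Dlist ws p)" by (simp only: ex)
  have "\<forall>x y. Dlist ws p x y = (\<Sum>j<r. K j * (al j * x + be j * y) ^ 2)"
    using pow_Dlist[OF pe, of ws] unfolding K_def ex by simp
  moreover have Keq: "K j = pc (2*s) (length ws) * (lam j * prod_list (map (\<lambda>w. al j * fst w + be j * snd w) ws))" for j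
    unfolding K_def by (simp only: mult_ac)
  moreover have "\<forall>j<r. K j \<ge> 0" unfolding Keq using nn pcp by (simp add: less_imp_le)
  moreover have "K j1 > 0" "K j2 > 0" unfolding Keq using j pcp by simp_all
  ultimately show False using final_contra[OF h2] j by blast
qed

lemma not_prop_det:
  assumes "\<not> proportional l m"
  shows "fst l * snd m - snd l * fst m \<noteq> 0"
proof
  assume d: "fst l * snd m - snd l * fst m = 0"
  have "proportional l m"
  proof (cases "fst m \<noteq> 0")
    case True
    have "fst l = fst l / fst m * fst m" "snd l = fst l / fst m * snd m"
      using True d by (simp_all add: field_simps)
    then show ?thesis unfolding proportional_def by blast
  next
    case False
    show ?thesis
    proof (cases "snd m \<noteq> 0")
      case True
      have "fst l = snd l / snd m * fst m" "snd l = snd l / snd m * snd m"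
        using True False d by (simp_all add: field_simps)
      then show ?thesis unfolding proportional_def by blast
    next
      case False2: False
      have "fst m = 0 * fst l" "snd m = 0 * snd l" using False False2 by simp_all
      then show ?thesis unfolding proportional_def by blast
    qed
  qed
  with assms show False by simp
qed

lemma main_neg:
  fixes r :: nat
  assumes s1: "s \<ge> 1" and hp: "hyp (2*s) p" and hon: "honest_rep s p r lam al be" and r2: "r \<ge> 2"
  shows "card {j. j < r \<and> lam j < 0} \<ge> s"
proof (rule ccontr)
  assume bs: "\<not> s \<le> card {j. j < r \<and> lam j < 0}"
  have lam0: "\<forall>j<r. lam j \<noteq> 0" and np: "\<forall>i<r. \<forall>j<r. i \<noteq> j \<longrightarrow> \<not> proportional (al i, be i) (al j, be j)"
    and pe: "\<forall>x y. p x y = (\<Sum>j<r. lam j * (al j * x + be j * y) ^ (2 * s))"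
    using hon unfolding honest_rep_def by blast+
  define det where "det j k = al j * be k - be j * al k" for j k
  have detnz: "det i j \<noteq> 0" if "i < r" "j < r" "i \<noteq> j" for i j
    using not_prop_det[of "(al i, be i)" "(al j, be j)"] np that unfolding det_def by auto
  define lw where "lw j w = al j * fst w + be j * snd w" for j w
  define uk where "uk k = (be k, - al k)" for k
  have lwuk: "lw j (uk k) = det j k" for j k unfolding lw_def uk_def det_def by simp
  have det_self: "det j j = 0" for j unfolding det_def by simp
  show False
  proof (cases "r \<le> s")
    case True
    define X where "X j = prod_list (map (det j) [2..<r])" for j
    have X0: "X 0 \<noteq> 0" "X 1 \<noteq> 0" unfolding X_def using detnz by (auto simp: prod_list_zero_iff)
    have X2: "X j = 0" if "2 \<le> j" "j < r" for j
      unfolding X_def using that det_self by (auto simp: prod_list_zero_iff intro!: rev_image_eqI[of j])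
    define D where "D = det 0 1"
    have D: "D \<noteq> 0" unfolding D_def using detnz r2 by simp
    define sol where "sol t0 t1 = ((t0 * be 1 - be 0 * t1) / D, (al 0 * t1 - t0 * al 1) / D)" for t0 t1
    have sol0: "lw 0 (sol t0 t1) = t0" for t0 t1
    proof -
      have "al 0 * (t0 * be 1 - be 0 * t1) + be 0 * (al 0 * t1 - t0 * al 1) = t0 * D"
        unfolding D_def det_def by (simp add: algebra_simps)
      then show ?thesis using D unfolding lw_def sol_def by (simp add: add_divide_distrib[symmetric])
    qed
    have sol1: "lw 1 (sol t0 t1) = t1" for t0 t1
    proof -
      have "al 1 * (t0 * be 1 - be 0 * t1) + be 1 * (al 0 * t1 - t0 * al 1) = t1 * D"
        unfolding D_def det_def by (simp add: algebra_simps)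
      then show ?thesis using D unfolding lw_def sol_def by (simp add: add_divide_distrib[symmetric])
    qed
    define w' where "w' = sol 1 1"
    define w1 where "w1 = sol (lam 0 * X 0) (lam 1 * X 1)"
    define m where "m = 2 * s - r - 1"
    define ws where "ws = map uk [2..<r] @ w1 # replicate m w'"
    have len: "length ws = 2 * s - 2" unfolding ws_def m_def using True r2 s1 by simp
    have pr: "prod_list (map (lw j) ws) = X j * lw j w1 * lw j w' ^ m" for j
      unfolding ws_def X_def by (simp add: lwuk o_def)
    have v0: "lam 0 * prod_list (map (lw 0) ws) = (lam 0 * X 0)\<^sup>2"
      by (simp add: pr w1_def w'_def sol0 power2_eq_square mult_ac)
    have v1: "lam 1 * prod_list (map (lw 1) ws) = (lam 1 * X 1)\<^sup>2"
      by (simp only: pr w1_def w'_def sol1 power2_eq_square mult_ac power_one mult_1_right mult_1_left)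
    have nn: "\<forall>j<r. lam j * prod_list (map (lw j) ws) \<ge> 0"
    proof (intro allI impI)
      fix j assume j: "j < r"
      show "lam j * prod_list (map (lw j) ws) \<ge> 0"
      proof (cases "j = 0 \<or> j = 1")
        case True
        then show ?thesis using v0 v1 by auto
      next
        case False then show ?thesis using X2 j by (simp add: pr)
      qed
    qed
    have p0: "lam 0 * prod_list (map (lw 0) ws) > 0"
      using X0 lam0 r2 v0 by simp
    have p1: "lam 1 * prod_list (map (lw 1) ws) > 0"
      using X0 lam0 r2 v1 by simp
    show False
      using contra_ws[OF s1 hp pe len, of 0 1] nn p0 p1 D r2 unfolding lw_def D_def det_def
      by auto
  next
    case False
    define b where "b = card {j. j < r \<and> lam j < 0}"
    define Nl where "Nl = filter (\<lambda>k. lam k < 0) [0..<r]"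
    have setN: "set Nl = {j. j < r \<and> lam j < 0}" unfolding Nl_def by auto
    have "distinct Nl" unfolding Nl_def by simp
    then have lenN: "length Nl = b" using distinct_card[of Nl] setN unfolding b_def by simp
    have bs': "b < s" using bs unfolding b_def by simp
    have nzl: "al j \<noteq> 0 \<or> be j \<noteq> 0" if jr: "j < r" for j
    proof -
      obtain k where "k < r" "k \<noteq> j"
      proof (cases "j = 0")
        case True then show ?thesis using that[of 1] r2 by auto
      next
        case False then show ?thesis using that[of 0] r2 by auto
      qed
      then have "det j k \<noteq> 0" using detnz jr by auto
      then show ?thesis unfolding det_def by auto
    qed
    have "finite ((\<lambda>j. - al j / be j) ` {..<r})" by simp
    then obtain t where t: "t \<notin> (\<lambda>j. - al j / be j) ` {..<r}"
      using ex_new_if_finite[OF infinite_UNIV_char_0] by blast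
    define z where "z = (1::real, t)"
    have lwz: "lw j z \<noteq> 0" if "j < r" for j
    proof
      assume h: "lw j z = 0"
      then have h': "al j + be j * t = 0" unfolding lw_def z_def by simp
      show False
      proof (cases "be j = 0")
        case True then show False using h' nzl[OF that] by simp
      next
        case False
        then have "t = - al j / be j" using h' by (simp add: field_simps)
        then show False using t that by auto
      qed
    qed
    define m where "m = s - 1 - b"
    define ws where "ws = map uk Nl @ map uk Nl @ replicate (2 * m) z"
    have len: "length ws = 2 * s - 2" unfolding ws_def m_def using lenN bs' by simp
    define Y where "Y j = prod_list (map (det j) Nl)" for j
    have pr: "prod_list (map (lw j) ws) = Y j * Y j * (lw j z ^ 2) ^ m" for j
      unfolding ws_def Y_def by (simp add: lwuk o_def power_mult)
    have Yneg: "Y j = 0" if "j < r" "lam j < 0" for j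
    proof -
      have "j \<in> set Nl" using setN that by auto
      then show ?thesis unfolding Y_def using det_self by (auto simp: prod_list_zero_iff intro!: rev_image_eqI[of j])
    qed
    have Ypos: "Y j \<noteq> 0" if "j < r" "lam j > 0" for j
    proof -
      have "det j k \<noteq> 0" if "k \<in> set Nl" for k
        using that setN detnz \<open>j < r\<close> \<open>lam j > 0\<close> by fastforce
      then show ?thesis unfolding Y_def by (auto simp: prod_list_zero_iff)
    qed
    have posv: "lam j * prod_list (map (lw j) ws) > 0" if "j < r" "lam j > 0" for j
    proof -
      have "Y j * Y j > 0" using Ypos[OF that] by (metis not_real_square_gt_zero)
      moreover have "(lw j z)\<^sup>2 ^ m > 0" using lwz[OF that(1)] by simp
      ultimately show ?thesis using that(2) by (simp add: pr)
    qed
    have nn: "\<forall>j<r. lam j * prod_list (map (lw j) ws) \<ge> 0"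
    proof (intro allI impI)
      fix j assume j: "j < r"
      show "lam j * prod_list (map (lw j) ws) \<ge> 0"
      proof (cases "lam j > 0")
        case True then show ?thesis using posv[OF j] by simp
      next
        case False
        then have "lam j < 0" using lam0 j by (simp add: less_le)
        then show ?thesis using Yneg[OF j] by (simp add: pr)
      qed
    qed
    define P where "P = {j. j < r \<and> lam j > 0}"
    have "{..<r} = P \<union> {j. j < r \<and> lam j < 0}" unfolding P_def using lam0
      by (auto simp: neq_iff)
    moreover have "P \<inter> {j. j < r \<and> lam j < 0} = {}" unfolding P_def by auto
    ultimately have "r = card P + b" unfolding b_def
      by (metis card_Un_disjoint card_lessThan finite_Un finite_lessThan)
    then have cP: "card P \<ge> 2" using False bs' by linarith
    then obtain j1 where j1: "j1 \<in> P" by (metis card.empty card.infinite ex_in_conv not_numeral_le_zero)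
    have "card (P - {j1}) \<ge> 1" using cP j1 by (simp add: card_Diff_singleton_if)
    then obtain j2 where j2: "j2 \<in> P - {j1}" by (metis card.empty card.infinite ex_in_conv not_one_le_zero)
    have "det j1 j2 \<noteq> 0" using j1 j2 detnz unfolding P_def by auto
    then show False
      using contra_ws[OF s1 hp pe len, of j1 j2] nn posv j1 j2 unfolding lw_def det_def P_def
      by auto
  qed
qed

theorem corollary2p6:
  fixes s :: nat and p :: "real \<Rightarrow> real \<Rightarrow> real" and a b :: nat
  assumes "s \<ge> 1"
    and "\<exists>u v :: nat \<Rightarrow> real. \<forall>x y. p x y = (\<Prod>j<2 * s. u j * x + v j * y)"
    and "\<forall>\<alpha> \<beta> :: real. p \<noteq> (\<lambda>x y. (\<alpha> * x + \<beta> * y) ^ (2 * s))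
                       \<and> p \<noteq> (\<lambda>x y. - ((\<alpha> * x + \<beta> * y) ^ (2 * s)))"
    and "(a, b) \<in> badges s p"
  shows "a \<ge> s \<and> b \<ge> s"
proof -
  note s1 = assms(1)
  obtain r lam al be where ab: "a = card {j. j < r \<and> lam j > 0}" "b = card {j. j < r \<and> lam j < 0}"
    and hon: "honest_rep s p r lam al be"
    using assms(4) unfolding badges_def by blast
  have lam0: "\<forall>j<r. lam j \<noteq> 0" and np: "\<forall>i<r. \<forall>j<r. i \<noteq> j \<longrightarrow> \<not> proportional (al i, be i) (al j, be j)"
    and pe: "\<forall>x y. p x y = (\<Sum>j<r. lam j * (al j * x + be j * y) ^ (2 * s))"
    using hon unfolding honest_rep_def by blast+
  obtain u v :: "nat \<Rightarrow> real" where uv: "\<forall>x y. p x y = (\<Prod>j<2 * s. u j * x + v j * y)"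
    using assms(2) by blast
  have hp: "hyp (2*s) p" unfolding hyp_def
    by (intro exI[of _ 1] exI[of _ u] exI[of _ v]) (simp add: uv)
  have hpn: "hyp (2*s) (\<lambda>x y. - p x y)" unfolding hyp_def
    by (intro exI[of _ "-1"] exI[of _ u] exI[of _ v]) (simp add: uv)
  have r2: "r \<ge> 2"
  proof (rule ccontr)
    assume "\<not> r \<ge> 2"
    then have "r = 0 \<or> r = 1" by auto
    then show False
    proof
      assume "r = 0"
      then have "p = (\<lambda>x y. (0 * x + 0 * y) ^ (2*s))" using pe s1 by (auto simp: fun_eq_iff)
      with assms(3) show False by blast
    next
      assume r1: "r = 1"
      then have pe1: "\<forall>x y. p x y = lam 0 * (al 0 * x + be 0 * y) ^ (2*s)" using pe by simp
      have l0: "lam 0 \<noteq> 0" using lam0 r1 by simp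
      define q where "q = root (2*s) \<bar>lam 0\<bar>"
      have qp: "q ^ (2*s) = \<bar>lam 0\<bar>" unfolding q_def using s1 by (intro real_root_pow_pos2) auto
      have eq: "(q * al 0 * x + q * be 0 * y) ^ (2*s) = \<bar>lam 0\<bar> * (al 0 * x + be 0 * y) ^ (2*s)" for x y
      proof -
        have "(q * al 0 * x + q * be 0 * y) ^ (2*s) = (q * (al 0 * x + be 0 * y)) ^ (2*s)"
          by (simp add: algebra_simps)
        also have "\<dots> = \<bar>lam 0\<bar> * (al 0 * x + be 0 * y) ^ (2*s)" by (simp only: power_mult_distrib qp)
        finally show ?thesis .
      qed
      show False
      proof (cases "lam 0 > 0")
        case True
        then have "p = (\<lambda>x y. (q * al 0 * x + q * be 0 * y) ^ (2*s))" using pe1 eq by (auto simp: fun_eq_iff)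
        with assms(3) show False by blast
      next
        case False
        then have "lam 0 < 0" using l0 by simp
        then have "p = (\<lambda>x y. - ((q * al 0 * x + q * be 0 * y) ^ (2*s)))" using pe1 eq by (auto simp: fun_eq_iff)
        with assms(3) show False by blast
      qed
    qed
  qed
  have "b \<ge> s" using main_neg[OF s1 hp hon r2] ab by simp
  moreover have "a \<ge> s"
  proof -
    have hon': "honest_rep s (\<lambda>x y. - p x y) r (\<lambda>j. - lam j) al be"
      unfolding honest_rep_def using lam0 np pe by (simp add: sum_negf[symmetric])
    have "card {j. j < r \<and> - lam j < 0} \<ge> s" using main_neg[OF s1 hpn hon' r2] by simp
    then show ?thesis using ab by simp
  qed
  ultimately show ?thesis by simp
qed

end
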